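(* In the multi-parameter setting described in the context, suppose $p_j(\theta)>0$ for all $j$ and all $\theta$. Then $H(\theta)=C_\Upsilon(\theta)$ holds if and only if the channel is quasi-classical, i.e. the eigenvectors $|w_k\rangle$ of the output state do not depend on $\theta$.
   Context: A multi-parameter quantum channel on density matrices on $\mathbb{C}^d$ is $\rho_0\mapsto\sum_kE_k(\theta)\rho_0E_k(\theta)^\dagger$ with $\theta\in\mathbb{R}^m$, Kraus operators differentiable in $\theta$, $\sum_kE_k^\dagger E_k=I$. The input is a fixed pure state $\rho_0=|\psi_0\rangle\langle\psi_0|$. Canonical Kraus operators $\{\Upsilon_k(\theta)\}_{k=1}^d$: a differentiable Kraus representation of the same channel with $\mathrm{tr}\{\Upsilon_k\rho_0\Upsilon_j^\dagger\}=\delta_{jk}p_k(\theta)$; the output is $\rho_{out}(\theta)=\sum_kp_k|w_k\rangle\langle w_k|$ with $|w_k\rangle=p_k^{-1/2}\Upsilon_k|\psi_0\rangle$ an orthonormal basis differentiable in $\theta$. Write $X^{(j)}=\partial X/\partial\theta^j$. $C_\Upsilon(\theta)_{jk}=4\sum_l\mathrm{Re}\,\mathrm{tr}\{\Upsilon_l^{(j)}\rho_0\Upsilon_l^{(k)\dagger}\}$; $H(\theta)_{jk}=\mathrm{Re}\,\mathrm{tr}\{\lambda^{(j)}\rho_{out}\lambda^{(k)}\}$ is the SLD quantum information matrix, with $\lambda^{(j)}$ a self-adjoint solution of $\partial\rho_{out}/\partial\theta^j=\frac12(\rho_{out}\lambda^{(j)}+\lambda^{(j)}\rho_{out})$. 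*)

theory Defs
  imports "HOL-Analysis.Analysis"
begin

text \<open>Complex d x d matrices are modelled as complex^'d^'d (d = CARD('d));
 parameters theta range over real^'m (m = CARD('m)).\<close>

definition adjoint :: "complex^'d^'d \<Rightarrow> complex^'d^'d" where
  "adjoint A = (\<chi> i j. cnj (A $ j $ i))"

definition ketbra :: "complex^'d \<Rightarrow> complex^'d \<Rightarrow> complex^'d^'d" where
  "ketbra u v = (\<chi> i j. u $ i * cnj (v $ j))"

definition pderiv_param :: "(real^'m \<Rightarrow> 'b::real_normed_vector) \<Rightarrow> 'm \<Rightarrow> real^'m \<Rightarrow> 'b" where
  "pderiv_param f j \<theta> = frechet_derivative f (at \<theta>) (axis j 1)"

definition kraus_apply :: "('k::finite \<Rightarrow> complex^'d^'d) \<Rightarrow> complex^'d^'d \<Rightarrow> complex^'d^'d" where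
  "kraus_apply E \<rho> = (\<Sum>k\<in>UNIV. E k ** \<rho> ** adjoint (E k))"

definition C_Ups :: "('l::finite \<Rightarrow> real^'m \<Rightarrow> complex^'d^'d) \<Rightarrow> complex^'d^'d \<Rightarrow> real^'m \<Rightarrow> real^'m^'m" where
  "C_Ups Ups \<rho>0 \<theta> = (\<chi> j k. 4 * (\<Sum>l\<in>UNIV.
      Re (trace (pderiv_param (Ups l) j \<theta> ** \<rho>0 ** adjoint (pderiv_param (Ups l) k \<theta>)))))"

definition H_SLD :: "('m \<Rightarrow> real^'m \<Rightarrow> complex^'d^'d) \<Rightarrow> (real^'m \<Rightarrow> complex^'d^'d) \<Rightarrow> real^'m \<Rightarrow> real^'m^'m" where
  "H_SLD lam \<rho>out \<theta> = (\<chi> j k. Re (trace (lam j \<theta> ** \<rho>out \<theta> ** lam k \<theta>)))"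

end

theory Submission
  imports Defs
begin


definition ip :: "complex^'d \<Rightarrow> complex^'d \<Rightarrow> complex" where
  "ip x y = (\<Sum>i\<in>UNIV. x$i * cnj (y$i))"

lemma ip_add_left: "ip (x + y) z = ip x z + ip y z"
  by (simp add: ip_def distrib_right sum.distrib)
lemma ip_add_right: "ip z (x + y) = ip z x + ip z y"
  by (simp add: ip_def distrib_left sum.distrib)
lemma ip_diff_left: "ip (x - y) z = ip x z - ip y z"
  by (simp add: ip_def left_diff_distrib sum_subtractf)
lemma ip_diff_right: "ip z (x - y) = ip z x - ip z y"
  by (simp add: ip_def right_diff_distrib sum_subtractf)
lemma ip_scaleC_left: "ip (c *s x) y = c * ip x y"
  by (simp add: ip_def sum_distrib_left mult.assoc)
lemma ip_scaleC_right: "ip x (c *s y) = cnj c * ip x y"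
  by (simp add: ip_def sum_distrib_left algebra_simps)
lemma ip_scaleR_left: "ip (r *\<^sub>R x) y = of_real r * ip x y"
  unfolding ip_def by (simp add: sum_distrib_left) (simp add: scaleR_conv_of_real mult.assoc)
lemma ip_scaleR_right: "ip x (r *\<^sub>R y) = of_real r * ip x y"
  unfolding ip_def by (simp add: sum_distrib_left) (simp add: scaleR_conv_of_real mult_ac)
lemma ip_zero_left[simp]: "ip 0 y = 0" by (simp add: ip_def)
lemma ip_zero_right[simp]: "ip y 0 = 0" by (simp add: ip_def)
lemma ip_sum_left: "ip (\<Sum>l\<in>S. f l) y = (\<Sum>l\<in>S. ip (f l) y)"
  by (induction S rule: infinite_finite_induct) (auto simp: ip_add_left)
lemma ip_cnj: "cnj (ip x y) = ip y x"
  by (simp add: ip_def mult.commute)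
lemma Re_ip: "Re (ip x y) = inner x y"
  by (simp add: ip_def inner_vec_def inner_complex_def Re_sum)
lemma ip_self: "ip x x = complex_of_real (inner x x)"
proof -
  have "Im (ip x x) = 0" by (simp add: ip_def Im_sum)
  then show ?thesis using Re_ip[of x x] by (simp add: complex_eq_iff)
qed

lemma adjoint_adjoint[simp]: "adjoint (adjoint A) = A"
  by (simp add: adjoint_def vec_eq_iff)

lemma ip_adj: "ip (A *v x) y = ip x (adjoint A *v y)"
  unfolding ip_def adjoint_def matrix_vector_mult_def
  apply (simp add: sum_distrib_left sum_distrib_right)
  apply (subst sum.swap)
  apply (simp add: mult_ac)
  done

lemma ketbra_mult_vec: "ketbra x y *v z = ip z y *s x"
  unfolding ketbra_def ip_def matrix_vector_mult_def
  by (simp add: vec_eq_iff sum_distrib_left mult_ac)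

lemma trace_ketbra: "trace (ketbra x y) = ip x y"
  by (simp add: trace_def ketbra_def ip_def)

lemma mat_ketbra: "A ** ketbra x y = ketbra (A *v x) y"
  unfolding ketbra_def matrix_matrix_mult_def matrix_vector_mult_def
  by (simp add: vec_eq_iff sum_distrib_left sum_distrib_right mult_ac)

lemma ketbra_mat: "ketbra x y ** B = ketbra x (adjoint B *v y)"
  unfolding ketbra_def matrix_matrix_mult_def matrix_vector_mult_def adjoint_def
  by (simp add: vec_eq_iff sum_distrib_left mult_ac)

lemma adjoint_ketbra: "adjoint (ketbra x y) = ketbra y x"
  by (simp add: adjoint_def ketbra_def vec_eq_iff)

lemma sandwich: "A ** ketbra x y ** adjoint B = ketbra (A *v x) (B *v y)"
  by (simp add: mat_ketbra ketbra_mat)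

lemma cscaleR: "r *\<^sub>R (z::complex) = of_real r * z"
  by (simp add: scaleR_conv_of_real)

lemma matrix_add_rdistrib': "((B + C) ** (A::complex^'d^'d)) = (B ** A) + (C ** A)"
  by (vector matrix_matrix_mult_def sum.distrib[symmetric] field_simps)

lemma trace_sum: "trace (\<Sum>l\<in>S. M l) = (\<Sum>l\<in>S. trace (M l :: complex^'d^'d))"
  by (induction S rule: infinite_finite_induct) (auto simp: trace_add trace_0[unfolded mat_0])

lemma trace_scaleR: "trace (r *\<^sub>R (M :: complex^'d^'d)) = of_real r * trace M"
  by (simp add: trace_def sum_distrib_left cscaleR)

lemma mmult_sum_left: "A ** (\<Sum>l\<in>S. M l) = (\<Sum>l\<in>S. A ** (M l :: complex^'d^'d))"
  by (induction S rule: infinite_finite_induct) (auto simp: matrix_add_ldistrib)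

lemma mmult_sum_right: "(\<Sum>l\<in>S. M l) ** (A::complex^'d^'d) = (\<Sum>l\<in>S. (M l :: complex^'d^'d) ** A)"
proof (induction S rule: infinite_finite_induct)
  case (insert x F)
  then show ?case using matrix_add_rdistrib'[of "M x" "sum M F" A] by simp
qed auto

lemma mmult_scaleR_right: "(A::complex^'d^'d) ** (r *\<^sub>R B) = r *\<^sub>R (A ** B)"
  unfolding matrix_matrix_mult_def
  by (simp add: vec_eq_iff cscaleR sum_distrib_left mult_ac)

lemma mmult_scaleR_left: "(r *\<^sub>R A) ** (B::complex^'d^'d) = r *\<^sub>R (A ** B)"
  unfolding matrix_matrix_mult_def
  by (simp add: vec_eq_iff cscaleR sum_distrib_left mult_ac)

lemma mvec_sum: "(\<Sum>l\<in>S. M l) *v z = (\<Sum>l\<in>S. (M l :: complex^'d^'d) *v z)"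
  by (induction S rule: infinite_finite_induct) (auto simp: matrix_vector_mult_add_rdistrib)

lemma mvec_scaleR: "(r *\<^sub>R (M :: complex^'d^'d)) *v z = r *\<^sub>R (M *v z)"
  unfolding matrix_vector_mult_def
  by (simp add: vec_eq_iff cscaleR sum_distrib_left mult_ac)

lemma mvec_scaleR_right: "(M :: complex^'d^'d) *v (r *\<^sub>R z) = r *\<^sub>R (M *v z)"
  unfolding matrix_vector_mult_def
  by (simp add: vec_eq_iff cscaleR sum_distrib_left mult_ac)
lemma complete:
  fixes v :: "'d \<Rightarrow> complex^'d"
  assumes on: "\<And>a b. ip (v a) (v b) = (if a = b then 1 else 0)"
    and z: "\<And>m. ip x (v m) = 0"
  shows "x = 0"
proof -
  define V :: "complex^'d^'d" where "V = (\<chi> a i. cnj (v a $ i))"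
  have "V ** adjoint V = mat 1"
    unfolding matrix_matrix_mult_def V_def adjoint_def mat_def
    using on by (simp add: vec_eq_iff ip_def mult.commute)
  then have inv: "adjoint V ** V = mat 1" using matrix_left_right_inverse by blast
  have "V *v x = 0"
    using z unfolding V_def matrix_vector_mult_def ip_def by (simp add: vec_eq_iff mult.commute)
  then have "(adjoint V ** V) *v x = 0"
    by (simp add: matrix_vector_mul_assoc[symmetric])
  then show ?thesis using inv by simp
qed

lemma lin_mvec: "bounded_linear (\<lambda>M::complex^'d^'d. M *v x)"
proof -
  have "linear (\<lambda>M::complex^'d^'d. M *v x)"
    by (rule linearI) (simp_all add: matrix_vector_mult_add_rdistrib mvec_scaleR)
  then show ?thesis by (simp add: linear_conv_bounded_linear)
qed

lemma bil_ketbra: "bounded_bilinear (ketbra :: complex^'d \<Rightarrow> complex^'d \<Rightarrow> complex^'d^'d)"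
proof -
  have "bilinear (ketbra :: complex^'d \<Rightarrow> complex^'d \<Rightarrow> complex^'d^'d)"
    unfolding bilinear_def
    by (auto intro!: linearI simp: ketbra_def vec_eq_iff distrib_left distrib_right cscaleR mult_ac)
  then show ?thesis by (simp add: bilinear_conv_bounded_bilinear)
qed

lemma bil_ip: "bounded_bilinear (ip :: complex^'d \<Rightarrow> complex^'d \<Rightarrow> complex)"
proof -
  have "bilinear (ip :: complex^'d \<Rightarrow> complex^'d \<Rightarrow> complex)"
    unfolding bilinear_def
    by (auto intro!: linearI simp: ip_add_left ip_add_right ip_scaleR_left ip_scaleR_right cscaleR)
  then show ?thesis by (simp add: bilinear_conv_bounded_bilinear)
qed

lemma sa_ip: "adjoint L = L \<Longrightarrow> ip (L *v x) y = ip x (L *v y)"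
  by (metis ip_adj)

lemma sa_inner: "adjoint L = L \<Longrightarrow> inner (L *v x) y = inner x (L *v y)"
  by (metis Re_ip sa_ip)

lemma key_half:
  fixes u a :: "'d \<Rightarrow> complex^'d" and Lj Lk R :: "complex^'d^'d"
  assumes R: "R = (\<Sum>l\<in>UNIV. ketbra (u l) (u l))"
    and saj: "adjoint Lj = Lj" and sak: "adjoint Lk = Lk"
    and Sj: "(\<Sum>l\<in>UNIV. ketbra (u l) (a l) + ketbra (a l) (u l)) = (1/2) *\<^sub>R (R ** Lj + Lj ** R)"
  shows "2 * (\<Sum>l\<in>UNIV. inner (a l) (Lk *v u l)) = (\<Sum>l\<in>UNIV. inner (Lj *v u l) (Lk *v u l))"
proof -
  have e1: "trace (Lk ** (\<Sum>l\<in>UNIV. ketbra (u l) (a l) + ketbra (a l) (u l)))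
      = (\<Sum>l\<in>UNIV. ip (Lk *v u l) (a l) + ip (Lk *v a l) (u l))"
    by (simp add: mmult_sum_left matrix_add_ldistrib mat_ketbra trace_sum trace_add trace_ketbra)
  have e2: "trace (Lk ** ((1/2) *\<^sub>R (R ** Lj + Lj ** R)))
      = of_real (1/2) * (\<Sum>l\<in>UNIV. ip (Lk *v u l) (Lj *v u l) + ip (Lk *v (Lj *v u l)) (u l))"
    by (simp add: R mmult_scaleR_right trace_scaleR matrix_add_ldistrib mmult_sum_left mmult_sum_right
        ketbra_mat mat_ketbra trace_sum trace_add trace_ketbra sum.distrib saj)
  have "Re (\<Sum>l\<in>UNIV. ip (Lk *v u l) (a l) + ip (Lk *v a l) (u l))
      = Re (of_real (1/2) * (\<Sum>l\<in>UNIV. ip (Lk *v u l) (Lj *v u l) + ip (Lk *v (Lj *v u l)) (u l)))"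
    using e1 e2 Sj by simp
  then have "(\<Sum>l\<in>UNIV. inner (Lk *v u l) (a l) + inner (Lk *v a l) (u l))
      = (1/2) * (\<Sum>l\<in>UNIV. inner (Lk *v u l) (Lj *v u l) + inner (Lk *v (Lj *v u l)) (u l))"
    by (simp add: Re_sum Re_ip)
  moreover have "\<And>l. inner (Lk *v a l) (u l) = inner (a l) (Lk *v u l)"
    using sak sa_inner by blast
  moreover have "\<And>l. inner (Lk *v (Lj *v u l)) (u l) = inner (Lj *v u l) (Lk *v u l)"
    using sak sa_inner by blast
  ultimately show ?thesis
    by (simp add: inner_commute sum.distrib)
qed

lemma key_identity:
  fixes u aj ak :: "'d \<Rightarrow> complex^'d" and Lj Lk R :: "complex^'d^'d"
  assumes R: "R = (\<Sum>l\<in>UNIV. ketbra (u l) (u l))"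
    and saj: "adjoint Lj = Lj" and sak: "adjoint Lk = Lk"
    and Sj: "(\<Sum>l\<in>UNIV. ketbra (u l) (aj l) + ketbra (aj l) (u l)) = (1/2) *\<^sub>R (R ** Lj + Lj ** R)"
    and Sk: "(\<Sum>l\<in>UNIV. ketbra (u l) (ak l) + ketbra (ak l) (u l)) = (1/2) *\<^sub>R (R ** Lk + Lk ** R)"
  shows "4 * (\<Sum>l\<in>UNIV. inner (aj l) (ak l)) - Re (trace (Lj ** R ** Lk))
       = (\<Sum>l\<in>UNIV. inner (2 *\<^sub>R aj l - Lj *v u l) (2 *\<^sub>R ak l - Lk *v u l))"
proof -
  have P1: "2 * (\<Sum>l\<in>UNIV. inner (aj l) (Lk *v u l)) = (\<Sum>l\<in>UNIV. inner (Lj *v u l) (Lk *v u l))"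
    by (rule key_half[OF R saj sak Sj])
  have P2: "2 * (\<Sum>l\<in>UNIV. inner (ak l) (Lj *v u l)) = (\<Sum>l\<in>UNIV. inner (Lj *v u l) (Lk *v u l))"
    using key_half[OF R sak saj Sk] by (simp add: inner_commute)
  have H: "Re (trace (Lj ** R ** Lk)) = (\<Sum>l\<in>UNIV. inner (Lj *v u l) (Lk *v u l))"
    by (simp add: R mmult_sum_left mmult_sum_right mat_ketbra ketbra_mat sak trace_sum trace_ketbra Re_sum Re_ip)
  have "(\<Sum>l\<in>UNIV. inner (2 *\<^sub>R aj l - Lj *v u l) (2 *\<^sub>R ak l - Lk *v u l))
     = 4 * (\<Sum>l\<in>UNIV. inner (aj l) (ak l)) - 2 * (\<Sum>l\<in>UNIV. inner (aj l) (Lk *v u l))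
       - 2 * (\<Sum>l\<in>UNIV. inner (ak l) (Lj *v u l)) + (\<Sum>l\<in>UNIV. inner (Lj *v u l) (Lk *v u l))"
    by (simp add: inner_diff_left inner_diff_right sum_subtractf sum.distrib sum_distrib_left inner_commute algebra_simps)
  then show ?thesis using P1 P2 H by simp
qed

lemma deriv_const_zero:
  assumes "(f has_derivative f') (at x)" and "\<And>y. f y = c"
  shows "f' h = 0"
proof -
  have "f = (\<lambda>_. c)" using assms(2) by auto
  then have "(f has_derivative (\<lambda>_. 0)) (at x)" by simp
  then have "f' = (\<lambda>_. 0)" using has_derivative_unique assms(1) by blast
  then show ?thesis by simp
qed

lemma lin_axis_zero:
  fixes f :: "real^'m \<Rightarrow> 'b::real_normed_vector"
  assumes "linear f" and "\<And>j. f (axis j 1) = 0"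
  shows "f h = 0"
proof -
  have "h = (\<Sum>j\<in>UNIV. h$j *\<^sub>R axis j 1)"
    using basis_expansion[of h] by (simp add: scalar_mult_eq_scaleR)
  then have "f h = (\<Sum>j\<in>UNIV. h$j *\<^sub>R f (axis j 1))"
    by (metis (no_types, lifting) assms(1) linear_scale linear_sum sum.cong)
  then show ?thesis using assms(2) by simp
qed

lemma ketbra_scaleR: "ketbra (a *\<^sub>R x) (b *\<^sub>R y) = (a * b) *\<^sub>R ketbra x y"
  by (simp add: ketbra_def vec_eq_iff cscaleR mult_ac)

lemma RipV:
  fixes V :: "'d \<Rightarrow> complex^'d"
  assumes on: "\<And>a b. ip (V a) (V b) = (if a = b then 1 else 0)"
  shows "ip ((\<Sum>n\<in>UNIV. c n *\<^sub>R ketbra (V n) (V n)) *v x) (V m) = of_real (c m) * ip x (V m)"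
  by (simp add: mvec_sum mvec_scaleR ketbra_mult_vec ip_sum_left ip_scaleR_left ip_scaleC_left on
       if_distrib if_distribR cong: if_cong)

lemma RV:
  fixes V :: "'d \<Rightarrow> complex^'d"
  assumes on: "\<And>a b. ip (V a) (V b) = (if a = b then 1 else 0)"
  shows "(\<Sum>n\<in>UNIV. c n *\<^sub>R ketbra (V n) (V n)) *v V l = c l *\<^sub>R V l"
  by (simp add: mvec_sum mvec_scaleR ketbra_mult_vec on if_distrib if_distribR cong: if_cong)




theorem lemma9:
  fixes E :: "'k::finite \<Rightarrow> real^'m \<Rightarrow> complex^'d^'d"
    and Ups :: "'d \<Rightarrow> real^'m \<Rightarrow> complex^'d^'d"
    and p :: "'d \<Rightarrow> real^'m \<Rightarrow> real"
    and \<psi>0 :: "complex^'d"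
    and lam :: "'m \<Rightarrow> real^'m \<Rightarrow> complex^'d^'d"
  assumes E_diff: "\<And>k \<theta>. E k differentiable (at \<theta>)"
    and E_trace_pres: "\<And>\<theta>. (\<Sum>k\<in>UNIV. adjoint (E k \<theta>) ** E k \<theta>) = mat 1"
    and Ups_diff: "\<And>k \<theta>. Ups k differentiable (at \<theta>)"
    and Ups_same_channel: "\<And>\<theta> \<rho>. kraus_apply (\<lambda>k. Ups k \<theta>) \<rho> = kraus_apply (\<lambda>k. E k \<theta>) \<rho>"
    and psi0_unit: "norm \<psi>0 = 1"
    and Ups_canonical: "\<And>\<theta> j k. trace (Ups k \<theta> ** ketbra \<psi>0 \<psi>0 ** adjoint (Ups j \<theta>))
                                   = (if j = k then complex_of_real (p k \<theta>) else 0)"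
    and p_pos: "\<And>j \<theta>. p j \<theta> > 0"
    and lam_sa: "\<And>j \<theta>. adjoint (lam j \<theta>) = lam j \<theta>"
    and lam_SLD: "\<And>j \<theta>. pderiv_param (\<lambda>\<theta>'. kraus_apply (\<lambda>k. E k \<theta>') (ketbra \<psi>0 \<psi>0)) j \<theta>
         = (1/2) *\<^sub>R (kraus_apply (\<lambda>k. E k \<theta>) (ketbra \<psi>0 \<psi>0) ** lam j \<theta>
                      + lam j \<theta> ** kraus_apply (\<lambda>k. E k \<theta>) (ketbra \<psi>0 \<psi>0))"
  shows "(\<forall>\<theta>. H_SLD lam (\<lambda>\<theta>'. kraus_apply (\<lambda>k. E k \<theta>') (ketbra \<psi>0 \<psi>0)) \<theta>
                = C_Ups Ups (ketbra \<psi>0 \<psi>0) \<theta>)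
         \<longleftrightarrow> (\<forall>k. \<exists>v. \<forall>\<theta>. (1 / sqrt (p k \<theta>)) *\<^sub>R (Ups k \<theta> *v \<psi>0) = v)"
proof -
  define \<rho>0 where "\<rho>0 = ketbra \<psi>0 \<psi>0"
  define u where "u l \<theta> = Ups l \<theta> *v \<psi>0" for l \<theta>
  define Du where "Du l \<theta> h = frechet_derivative (Ups l) (at \<theta>) h *v \<psi>0" for l \<theta> h
  define a where "a l j \<theta> = Du l \<theta> (axis j 1)" for l j \<theta>
  define R where "R \<theta> = (\<Sum>l\<in>UNIV. ketbra (u l \<theta>) (u l \<theta>))" for \<theta>
  have du: "(u l has_derivative Du l \<theta>) (at \<theta>)" for l \<theta>
  proof -
    have "(Ups l has_derivative frechet_derivative (Ups l) (at \<theta>)) (at \<theta>)"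
      using Ups_diff frechet_derivative_works by blast
    from bounded_linear.has_derivative[OF lin_mvec this, of \<psi>0]
    show ?thesis unfolding u_def[abs_def] Du_def by simp
  qed
  have pd_a: "pderiv_param (Ups l) j \<theta> *v \<psi>0 = a l j \<theta>" for l j \<theta>
    by (simp add: pderiv_param_def a_def Du_def)
  have Rk: "kraus_apply (\<lambda>k. E k \<theta>) \<rho>0 = R \<theta>" for \<theta>
    unfolding Ups_same_channel[symmetric] kraus_apply_def R_def \<rho>0_def u_def
    by (simp add: sandwich)
  have Rfun: "(\<lambda>\<theta>'. kraus_apply (\<lambda>k. E k \<theta>') \<rho>0) = R" using Rk by auto
  have dR: "(R has_derivative (\<lambda>h. \<Sum>l\<in>UNIV. ketbra (u l \<theta>) (Du l \<theta> h) + ketbra (Du l \<theta> h) (u l \<theta>))) (at \<theta>)" for \<theta>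
    unfolding R_def[abs_def]
    by (intro has_derivative_sum bounded_bilinear.FDERIV[OF bil_ketbra] du)
  have SLD: "(\<Sum>l\<in>UNIV. ketbra (u l \<theta>) (a l j \<theta>) + ketbra (a l j \<theta>) (u l \<theta>))
       = (1/2) *\<^sub>R (R \<theta> ** lam j \<theta> + lam j \<theta> ** R \<theta>)" for j \<theta>
  proof -
    have "pderiv_param R j \<theta> = (\<Sum>l\<in>UNIV. ketbra (u l \<theta>) (a l j \<theta>) + ketbra (a l j \<theta>) (u l \<theta>))"
      unfolding pderiv_param_def a_def using frechet_derivative_at[OF dR[of \<theta>], symmetric] by simp
    then show ?thesis using lam_SLD[of j \<theta>] by (simp add: Rfun[unfolded \<rho>0_def] Rk[unfolded \<rho>0_def])
  qed
  have Heq: "H_SLD lam (\<lambda>\<theta>'. kraus_apply (\<lambda>k. E k \<theta>') (ketbra \<psi>0 \<psi>0)) \<theta> $ j $ k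
      = Re (trace (lam j \<theta> ** R \<theta> ** lam k \<theta>))" for \<theta> j k
    by (simp add: H_SLD_def Rfun[unfolded \<rho>0_def])
  have Ceq: "C_Ups Ups (ketbra \<psi>0 \<psi>0) \<theta> $ j $ k = 4 * (\<Sum>l\<in>UNIV. inner (a l j \<theta>) (a l k \<theta>))" for \<theta> j k
    by (simp add: C_Ups_def sandwich trace_ketbra Re_ip pd_a)
  have ID: "C_Ups Ups (ketbra \<psi>0 \<psi>0) \<theta> $ j $ k - H_SLD lam (\<lambda>\<theta>'. kraus_apply (\<lambda>k. E k \<theta>') (ketbra \<psi>0 \<psi>0)) \<theta> $ j $ k
      = (\<Sum>l\<in>UNIV. inner (2 *\<^sub>R a l j \<theta> - lam j \<theta> *v u l \<theta>) (2 *\<^sub>R a l k \<theta> - lam k \<theta> *v u l \<theta>))" for \<theta> j k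
    unfolding Ceq Heq
    by (rule key_identity[OF R_def lam_sa lam_sa SLD SLD])
  have orth: "ip (u x \<theta>) (u y \<theta>) = (if x = y then complex_of_real (p x \<theta>) else 0)" for x y \<theta>
    using Ups_canonical[where \<theta>=\<theta> and j=y and k=x] by (simp add: sandwich trace_ketbra u_def eq_commute)
  have bwd: "\<forall>\<theta>. H_SLD lam (\<lambda>\<theta>'. kraus_apply (\<lambda>k. E k \<theta>') (ketbra \<psi>0 \<psi>0)) \<theta>
                = C_Ups Ups (ketbra \<psi>0 \<psi>0) \<theta>"
    if asm: "\<forall>k. \<exists>v. \<forall>\<theta>. (1 / sqrt (p k \<theta>)) *\<^sub>R (Ups k \<theta> *v \<psi>0) = v"
  proof -
    obtain V where V: "\<And>k \<theta>. (1 / sqrt (p k \<theta>)) *\<^sub>R u k \<theta> = V k"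
      using asm unfolding u_def by metis
    have uV: "u k \<theta> = sqrt (p k \<theta>) *\<^sub>R V k" for k \<theta>
    proof -
      have "sqrt (p k \<theta>) > 0" using p_pos by simp
      then show ?thesis using V[of k \<theta>, symmetric] by simp
    qed
    have onV: "ip (V x) (V y) = (if x = y then 1 else 0)" for x y
    proof -
      have e0: "ip (u x 0) (u y 0) = of_real (sqrt (p x 0) * sqrt (p y 0)) * ip (V x) (V y)"
        by (simp add: uV ip_scaleR_left ip_scaleR_right)
      have e: "of_real (sqrt (p x 0) * sqrt (p y 0)) * ip (V x) (V y) = (if x = y then complex_of_real (p x 0) else 0)"
        using orth[where x=x and y=y and \<theta>=0] e0 by simp
      have pa: "p x 0 > 0" "p y 0 > 0" using p_pos by auto
      show ?thesis
      proof (cases "x = y")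
        case True
        then show ?thesis using e pa by (simp add: real_sqrt_mult_self)
      next
        case False
        then show ?thesis using e pa by simp
      qed
    qed
    have x0: "2 *\<^sub>R a l j \<theta> = lam j \<theta> *v u l \<theta>" for l j \<theta>
    proof -
      have an: "a n j \<theta> = Re (ip (a n j \<theta>) (V n)) *\<^sub>R V n" for n
      proof -
        have z1: "ip (a n j \<theta>) (V m) = 0" if "m \<noteq> n" for m
        proof -
          have "((\<lambda>\<theta>'. ip (u n \<theta>') (V m)) has_derivative (\<lambda>h. ip (Du n \<theta> h) (V m))) (at \<theta>)"
            by (rule bounded_linear.has_derivative[OF bounded_bilinear.bounded_linear_left[OF bil_ip] du])
          moreover have "ip (u n \<theta>') (V m) = 0" for \<theta>' using onV that by (simp add: uV ip_scaleR_left)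
          ultimately show ?thesis unfolding a_def by (rule deriv_const_zero)
        qed
        have z2: "Im (ip (a n j \<theta>) (V n)) = 0"
        proof -
          have "((\<lambda>\<theta>'. Im (ip (u n \<theta>') (V n))) has_derivative (\<lambda>h. Im (ip (Du n \<theta> h) (V n)))) (at \<theta>)"
            by (rule bounded_linear.has_derivative[OF bounded_linear_Im bounded_linear.has_derivative[OF bounded_bilinear.bounded_linear_left[OF bil_ip] du]])
          moreover have "Im (ip (u n \<theta>') (V n)) = 0" for \<theta>' using onV by (simp add: uV ip_scaleR_left)
          ultimately show ?thesis unfolding a_def by (rule deriv_const_zero)
        qed
        have "a n j \<theta> - Re (ip (a n j \<theta>) (V n)) *\<^sub>R V n = 0"
        proof (rule complete[OF onV])
          fix m show "ip (a n j \<theta> - Re (ip (a n j \<theta>) (V n)) *\<^sub>R V n) (V m) = 0"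
            using z1 z2 onV by (cases "m = n") (auto simp: ip_diff_left ip_scaleR_left complex_eq_iff)
        qed
        then show ?thesis by simp
      qed
      define rr where "rr n = Re (ip (a n j \<theta>) (V n))" for n
      define s where "s n = sqrt (p n \<theta>)" for n
      define K where "K n = ketbra (V n) (V n)" for n
      define L where "L = lam j \<theta>"
      have s_pos: "s n > 0" for n using p_pos by (simp add: s_def)
      have ss: "s n * s n = p n \<theta>" for n using p_pos[of n \<theta>] by (simp add: s_def real_sqrt_mult_self)
      have Req: "R \<theta> = (\<Sum>n\<in>UNIV. p n \<theta> *\<^sub>R K n)"
        unfolding R_def K_def by (simp add: uV ketbra_scaleR real_sqrt_mult_self p_pos less_imp_le)
      have Meq: "(\<Sum>l\<in>UNIV. ketbra (u l \<theta>) (a l j \<theta>) + ketbra (a l j \<theta>) (u l \<theta>))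
           = (\<Sum>n\<in>UNIV. (2 * s n * rr n) *\<^sub>R K n)"
      proof (rule sum.cong[OF refl])
        fix n
        have an': "a n j \<theta> = rr n *\<^sub>R V n" using an[of n] by (simp add: rr_def)
        show "ketbra (u n \<theta>) (a n j \<theta>) + ketbra (a n j \<theta>) (u n \<theta>) = (2 * s n * rr n) *\<^sub>R K n"
          unfolding an' by (simp add: uV ketbra_scaleR K_def s_def flip: scaleR_add_left)
      qed
      have S: "(\<Sum>n\<in>UNIV. (2 * s n * rr n) *\<^sub>R K n)
          = (1/2) *\<^sub>R ((\<Sum>n\<in>UNIV. p n \<theta> *\<^sub>R K n) ** L + L ** (\<Sum>n\<in>UNIV. p n \<theta> *\<^sub>R K n))"
        using SLD[of \<theta> j] unfolding Meq Req L_def .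
      have eqm: "of_real (2 * s m * rr m) * (if l = m then 1 else 0)
           = of_real ((p m \<theta> + p l \<theta>) / 2) * ip (L *v V l) (V m)" for m
      proof -
        have "ip ((\<Sum>n\<in>UNIV. (2 * s n * rr n) *\<^sub>R K n) *v V l) (V m)
           = ip (((1/2) *\<^sub>R ((\<Sum>n\<in>UNIV. p n \<theta> *\<^sub>R K n) ** L + L ** (\<Sum>n\<in>UNIV. p n \<theta> *\<^sub>R K n))) *v V l) (V m)"
          using S by simp
        moreover have "ip ((\<Sum>n\<in>UNIV. (2 * s n * rr n) *\<^sub>R K n) *v V l) (V m) = of_real (2 * s m * rr m) * (if l = m then 1 else 0)"
          unfolding K_def by (simp add: RipV[OF onV] onV)
        moreover have "ip (((1/2) *\<^sub>R ((\<Sum>n\<in>UNIV. p n \<theta> *\<^sub>R K n) ** L + L ** (\<Sum>n\<in>UNIV. p n \<theta> *\<^sub>R K n))) *v V l) (V m)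
            = of_real ((p m \<theta> + p l \<theta>) / 2) * ip (L *v V l) (V m)"
        proof -
          define Rm where "Rm = (\<Sum>n\<in>UNIV. p n \<theta> *\<^sub>R K n)"
          have s1: "((1/2) *\<^sub>R (Rm ** L + L ** Rm)) *v V l = (1/2) *\<^sub>R (Rm *v (L *v V l) + L *v (Rm *v V l))"
            by (simp only: mvec_scaleR matrix_vector_mult_add_rdistrib matrix_vector_mul_assoc)
          have s2: "Rm *v V l = p l \<theta> *\<^sub>R V l" unfolding Rm_def K_def by (rule RV[OF onV])
          have s3: "ip (Rm *v (L *v V l)) (V m) = of_real (p m \<theta>) * ip (L *v V l) (V m)"
            unfolding Rm_def K_def by (rule RipV[OF onV])
          have "ip (((1/2) *\<^sub>R (Rm ** L + L ** Rm)) *v V l) (V m)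
               = of_real (1/2) * (of_real (p m \<theta>) * ip (L *v V l) (V m) + of_real (p l \<theta>) * ip (L *v V l) (V m))"
            unfolding s1 s2 by (simp only: ip_scaleR_left ip_add_left s3 mvec_scaleR_right)
          also have "\<dots> = of_real ((p m \<theta> + p l \<theta>) / 2) * ip (L *v V l) (V m)"
            by (simp add: algebra_simps)
          finally show ?thesis unfolding Rm_def .
        qed
        ultimately show ?thesis by simp
      qed
      have LV: "L *v V l = (2 * rr l / s l) *\<^sub>R V l"
      proof -
        have "L *v V l - (2 * rr l / s l) *\<^sub>R V l = 0"
        proof (rule complete[OF onV])
          fix m
          have pp: "(p m \<theta> + p l \<theta>) / 2 > 0" using p_pos[of m \<theta>] p_pos[of l \<theta>] by simp
          show "ip (L *v V l - (2 * rr l / s l) *\<^sub>R V l) (V m) = 0"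
          proof (cases "m = l")
            case True
            have "ip (L *v V l) (V l) = of_real (2 * rr l / s l)"
            proof -
              have "of_real (2 * s l * rr l) = of_real (p l \<theta>) * ip (L *v V l) (V l)"
                using eqm[of l] by simp
              then have "ip (L *v V l) (V l) = of_real (2 * s l * rr l) / of_real (p l \<theta>)"
                using p_pos[of l \<theta>] by (simp add: field_simps)
              also have "\<dots> = of_real (2 * s l * rr l / (s l * s l))" by (simp add: ss)
              also have "\<dots> = of_real (2 * rr l / s l)" using s_pos[of l] by simp
              finally show ?thesis .
            qed
            then show ?thesis using True by (simp add: ip_diff_left ip_scaleR_left onV)
          next
            case False
            then have "of_real ((p m \<theta> + p l \<theta>) / 2) * ip (L *v V l) (V m) = 0"
              using eqm[of m] by simp
            then have "ip (L *v V l) (V m) = 0" using pp by (simp del: of_real_add of_real_divide)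
            then show ?thesis using False by (simp add: ip_diff_left ip_scaleR_left onV)
          qed
        qed
        then show ?thesis by simp
      qed
      show ?thesis
        using an[of l] LV s_pos[of l] unfolding L_def[symmetric]
        by (simp add: uV mvec_scaleR_right s_def[symmetric] rr_def[symmetric])
    qed
    show ?thesis
    proof
      fix \<theta>
      show "H_SLD lam (\<lambda>\<theta>'. kraus_apply (\<lambda>k. E k \<theta>') (ketbra \<psi>0 \<psi>0)) \<theta> = C_Ups Ups (ketbra \<psi>0 \<psi>0) \<theta>"
      proof (simp add: vec_eq_iff, intro allI)
        fix j k
        show "H_SLD lam (\<lambda>\<theta>'. kraus_apply (\<lambda>k. E k \<theta>') (ketbra \<psi>0 \<psi>0)) \<theta> $ j $ k = C_Ups Ups (ketbra \<psi>0 \<psi>0) \<theta> $ j $ k"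
          using ID[of \<theta> j k] by (simp add: x0)
      qed
    qed
  qed
  have fwd: "\<forall>k. \<exists>v. \<forall>\<theta>. (1 / sqrt (p k \<theta>)) *\<^sub>R (Ups k \<theta> *v \<psi>0) = v"
    if HC: "\<forall>\<theta>. H_SLD lam (\<lambda>\<theta>'. kraus_apply (\<lambda>k. E k \<theta>') (ketbra \<psi>0 \<psi>0)) \<theta>
                = C_Ups Ups (ketbra \<psi>0 \<psi>0) \<theta>"
  proof
    fix l
    have x0: "a n j \<theta> = (1/2) *\<^sub>R (lam j \<theta> *v u n \<theta>)" for n j \<theta>
    proof -
      have "(\<Sum>l\<in>UNIV. inner (2 *\<^sub>R a l j \<theta> - lam j \<theta> *v u l \<theta>) (2 *\<^sub>R a l j \<theta> - lam j \<theta> *v u l \<theta>)) = 0"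
        using ID[of \<theta> j j] HC by simp
      then have "inner (2 *\<^sub>R a n j \<theta> - lam j \<theta> *v u n \<theta>) (2 *\<^sub>R a n j \<theta> - lam j \<theta> *v u n \<theta>) = 0"
        by (simp add: sum_nonneg_eq_0_iff)
      then have "2 *\<^sub>R a n j \<theta> = lam j \<theta> *v u n \<theta>" by simp
      then show ?thesis by (metis scaleR_scaleR nonzero_divide_eq_eq scaleR_one zero_neq_numeral divide_inverse_commute mult.commute)
    qed
    have pu: "p n \<theta> = inner (u n \<theta>) (u n \<theta>)" for n \<theta>
      using orth[where x=n and y=n and \<theta>=\<theta>] by (simp add: ip_self)
    have zA: "ip (a l j \<theta>) (u m \<theta>) = 0" if "m \<noteq> l" for m j \<theta>
    proof -
      have "((\<lambda>\<theta>'. ip (u m \<theta>') (u l \<theta>')) has_derivative (\<lambda>h. ip (u m \<theta>) (Du l \<theta> h) + ip (Du m \<theta> h) (u l \<theta>))) (at \<theta>)"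
        by (rule bounded_bilinear.FDERIV[OF bil_ip du du])
      moreover have "ip (u m \<theta>') (u l \<theta>') = 0" for \<theta>' using orth that by simp
      ultimately have "ip (u m \<theta>) (a l j \<theta>) + ip (a m j \<theta>) (u l \<theta>) = 0"
        unfolding a_def by (rule deriv_const_zero)
      then have "of_real (1/2) * ip (u m \<theta>) (lam j \<theta> *v u l \<theta>) + of_real (1/2) * ip (u m \<theta>) (lam j \<theta> *v u l \<theta>) = 0"
        by (simp add: x0 ip_scaleR_left ip_scaleR_right sa_ip[OF lam_sa])
      then have "ip (u m \<theta>) (lam j \<theta> *v u l \<theta>) = 0" by simp
      then have "ip (u m \<theta>) (a l j \<theta>) = 0" by (simp add: x0 ip_scaleR_right)
      then show ?thesis by (metis ip_cnj complex_cnj_zero)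
    qed
    have zB: "Im (ip (a l j \<theta>) (u l \<theta>)) = 0" for j \<theta>
    proof -
      have "ip (lam j \<theta> *v u l \<theta>) (u l \<theta>) = cnj (ip (lam j \<theta> *v u l \<theta>) (u l \<theta>))"
        by (metis ip_cnj sa_ip lam_sa)
      then have "Im (ip (lam j \<theta> *v u l \<theta>) (u l \<theta>)) = 0"
        by (metis cnj.simps(2) neg_equal_zero)
      then show ?thesis by (simp add: x0 ip_scaleR_left)
    qed
    define c where "c j \<theta> = inner (a l j \<theta>) (u l \<theta>) / p l \<theta>" for j \<theta>
    have aC: "a l j \<theta> = c j \<theta> *\<^sub>R u l \<theta>" for j \<theta>
    proof -
      define W where "W m = (1 / sqrt (p m \<theta>)) *\<^sub>R u m \<theta>" for m
      have onW: "ip (W x) (W y) = (if x = y then 1 else 0)" for x y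
      proof -
        have "ip (W x) (W y) = of_real (1 / sqrt (p x \<theta>) * (1 / sqrt (p y \<theta>))) * ip (u x \<theta>) (u y \<theta>)"
          by (simp add: W_def ip_scaleR_left ip_scaleR_right)
        moreover have "sqrt (p x \<theta>) * sqrt (p x \<theta>) = p x \<theta>"
          using p_pos[of x \<theta>] by (simp add: real_sqrt_mult_self)
        ultimately show ?thesis using orth[where x=x and y=y and \<theta>=\<theta>] p_pos[of x \<theta>]
        proof (cases "x = y")
          case True
          assume e: "ip (W x) (W y) = of_real (1 / sqrt (p x \<theta>) * (1 / sqrt (p y \<theta>))) * ip (u x \<theta>) (u y \<theta>)"
            and ss: "sqrt (p x \<theta>) * sqrt (p x \<theta>) = p x \<theta>"
          have "ip (W x) (W y) = of_real (1 / sqrt (p x \<theta>) * (1 / sqrt (p x \<theta>)) * p x \<theta>)"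
            using e True orth[where x=x and y=y and \<theta>=\<theta>] by simp
          also have "\<dots> = 1" using ss p_pos[of x \<theta>] by (simp add: field_simps)
          finally show ?thesis using True by simp
        qed simp
      qed
      have "a l j \<theta> - c j \<theta> *\<^sub>R u l \<theta> = 0"
      proof (rule complete[OF onW])
        fix m
        have "ip (a l j \<theta> - c j \<theta> *\<^sub>R u l \<theta>) (W m)
           = of_real (1 / sqrt (p m \<theta>)) * (ip (a l j \<theta>) (u m \<theta>) - of_real (c j \<theta>) * ip (u l \<theta>) (u m \<theta>))"
          by (simp add: W_def ip_diff_left ip_scaleR_left ip_scaleR_right algebra_simps)
        also have "\<dots> = 0"
        proof (cases "m = l")
          case True
          have "ip (a l j \<theta>) (u l \<theta>) = of_real (inner (a l j \<theta>) (u l \<theta>))"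
            using zB[of j \<theta>] by (simp add: complex_eq_iff Re_ip)
          then show ?thesis using True orth[where x=l and y=l and \<theta>=\<theta>] p_pos[of l \<theta>]
            by (simp add: c_def)
        next
          case False
          then show ?thesis using zA[OF False] orth[where x=l and y=m and \<theta>=\<theta>] by simp
        qed
        finally show "ip (a l j \<theta> - c j \<theta> *\<^sub>R u l \<theta>) (W m) = 0" .
      qed
      then show ?thesis by simp
    qed
    define P where "P \<theta>' = inner (u l \<theta>') (u l \<theta>')" for \<theta>'
    define w where "w \<theta>' = inverse (sqrt (P \<theta>')) *\<^sub>R u l \<theta>'" for \<theta>'
    have Ppos: "P \<theta> > 0" for \<theta> using pu p_pos P_def by metis
    have dw0: "(w has_derivative (\<lambda>h. 0)) (at \<theta>)" for \<theta>
    proof -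
      let ?s = "sqrt (P \<theta>)"
      let ?P' = "\<lambda>h. inner (u l \<theta>) (Du l \<theta> h) + inner (Du l \<theta> h) (u l \<theta>)"
      have dP: "(P has_derivative ?P') (at \<theta>)"
        unfolding P_def[abs_def] by (rule has_derivative_inner[OF du du])
      have dsq: "((\<lambda>x. sqrt (P x)) has_derivative (\<lambda>h. ?P' h * (inverse ?s / 2))) (at \<theta>)"
        by (rule DERIV_compose_FDERIV[OF DERIV_real_sqrt[OF Ppos] dP])
      have sne: "?s \<noteq> 0" using Ppos[of \<theta>] by simp
      have dq: "((\<lambda>x. inverse (sqrt (P x))) has_derivative (\<lambda>h. - (inverse ?s * (?P' h * (inverse ?s / 2)) * inverse ?s))) (at \<theta>)"
        by (rule Deriv.has_derivative_inverse[OF sne dsq])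
      have dw: "(w has_derivative (\<lambda>h. inverse ?s *\<^sub>R Du l \<theta> h + (- (inverse ?s * (?P' h * (inverse ?s / 2)) * inverse ?s)) *\<^sub>R u l \<theta>)) (at \<theta>)"
        unfolding w_def[abs_def] by (rule has_derivative_scaleR[OF dq du])
      have zero: "inverse ?s *\<^sub>R Du l \<theta> h + (- (inverse ?s * (?P' h * (inverse ?s / 2)) * inverse ?s)) *\<^sub>R u l \<theta> = 0" for h
      proof (rule lin_axis_zero[OF has_derivative_linear[OF dw]])
        fix j
        have Da: "Du l \<theta> (axis j 1) = c j \<theta> *\<^sub>R u l \<theta>" using aC[of j \<theta>] by (simp add: a_def)
        have ssP: "?s * ?s = P \<theta>" using Ppos[of \<theta>] by (simp add: real_sqrt_mult_self)
        have "inverse ?s *\<^sub>R Du l \<theta> (axis j 1) + (- (inverse ?s * (?P' (axis j 1) * (inverse ?s / 2)) * inverse ?s)) *\<^sub>R u l \<theta>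
            = (c j \<theta> / ?s - c j \<theta> * P \<theta> / (?s * ?s * ?s)) *\<^sub>R u l \<theta>"
          by (simp add: Da P_def[symmetric] algebra_simps field_simps)
        also have "\<dots> = 0" using ssP sne by (simp add: field_simps)
        finally show "inverse ?s *\<^sub>R Du l \<theta> (axis j 1) + (- (inverse ?s * (?P' (axis j 1) * (inverse ?s / 2)) * inverse ?s)) *\<^sub>R u l \<theta> = 0" .
      qed
      show ?thesis using dw zero by simp
    qed
    obtain v where "\<forall>x\<in>UNIV. w x = v"
      using has_derivative_zero_constant[of UNIV w] dw0 by auto
    then have "\<forall>\<theta>. (1 / sqrt (p l \<theta>)) *\<^sub>R (Ups l \<theta> *v \<psi>0) = v"
      by (simp add: w_def P_def pu u_def inverse_eq_divide)
    then show "\<exists>v. \<forall>\<theta>. (1 / sqrt (p l \<theta>)) *\<^sub>R (Ups l \<theta> *v \<psi>0) = v" by blast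
  qed
  show ?thesis using fwd bwd by blast
qed


end
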